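(* Let $M\in SL_2(\mathbb{Z})$ be hyperbolic and let $r>0$. Then there exist constants $\delta_M>0$ and $0<c_2<c_1$ such that for all $n_1,n_2\in\mathbb{Z}^2$ and every map $T:\mathbb{T}^2\to\mathbb{T}^2$ of the form $T(x)=Mx+\psi(x)\bmod\mathbb{Z}^2$ with $\psi\in\mathcal{B}_r$ and $d(T,M)\le\delta_M$, $$\exp\!\big(-2\pi c_1(|n_1|_M-|n_2|_M)\big)\,\big|I_{n_1,n_2}(T)\big|\le\exp\!\big(-2\pi c_2(\|n_1\|+\|n_2\|)\big),$$ where $I_{n_1,n_2}(T)=\int_{\mathbb{T}^2}\exp\big(2\pi i\,(n_2\cdot T(x)-n_1\cdot x)\big)\,dx$.
   Context: $\mathbb{T}^2=\mathbb{R}^2/\mathbb{Z}^2$ with Lebesgue measure. For $z=(z_1,z_2)\in\mathbb{C}^2$, $\|z\|=|z_1|+|z_2|$; matrices carry the associated operator norm. A matrix $M\in SL_2(\mathbb{Z})$ is hyperbolic if none of its eigenvalues has modulus $1$; $E^+,E^-$ are the eigenlines of $M^T$ for eigenvalues of modulus $\lambda_M>1$ and $\lambda_M^{-1}$; each $y\in\mathbb{R}^2$ is uniquely $y=y^+_M+y^-_M$ with $y^\pm_M\in E^\pm$, and $|y|_M:=\|y^+_M\|-\|y^-_M\|$. For $r>0$, $\mathcal{B}_r$ is the Banach space of $\mathbb{Z}^2$-periodic maps $\psi:\mathbb{R}^2\to\mathbb{R}^2$ extending holomorphically and boundedly to $\mathbb{R}^2+i(-r,r)^2$, with the sup norm there.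 For $T=M+\psi$, $d(T,M)=\sup_{z}\|\psi(z)\|+\sup_z\|D_z\psi\|$, suprema over $z\in\mathbb{R}^2+i(-r,r)^2$. *)

theory Defs
  imports "HOL-Analysis.Analysis"
begin

definition l1r :: "real^2 \<Rightarrow> real" where
  "l1r y = \<bar>y$1\<bar> + \<bar>y$2\<bar>"

definition l1c :: "complex^2 \<Rightarrow> real" where
  "l1c z = cmod (z$1) + cmod (z$2)"

definition opnorm1 :: "(complex^2 \<Rightarrow> complex^2) \<Rightarrow> real" where
  "opnorm1 L = Sup {l1c (L v) | v. l1c v \<le> 1}"

definition ivec :: "int^2 \<Rightarrow> real^2" where
  "ivec n = (\<chi> i. real_of_int (n$i))"

definition cvec :: "real^2 \<Rightarrow> complex^2" where
  "cvec x = (\<chi> i. complex_of_real (x$i))"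

definition SL2Z :: "real^2^2 \<Rightarrow> bool" where
  "SL2Z M \<longleftrightarrow> (\<forall>i j. M$i$j \<in> \<int>) \<and> det M = 1"

definition is_eigenvalue_c :: "real^2^2 \<Rightarrow> complex \<Rightarrow> bool" where
  "is_eigenvalue_c M l \<longleftrightarrow> det (mat l - (\<chi> i j. complex_of_real (M$i$j))) = 0"

definition hyperbolic :: "real^2^2 \<Rightarrow> bool" where
  "hyperbolic M \<longleftrightarrow> (\<forall>l. is_eigenvalue_c M l \<longrightarrow> cmod l \<noteq> 1)"

text \<open>the (real) eigenvalue of M^T of modulus > 1; its modulus is lambda_M\<close>
definition lamM :: "real^2^2 \<Rightarrow> real" where
  "lamM M = (THE l. \<bar>l\<bar> > 1 \<and> (\<exists>v. v \<noteq> 0 \<and> transpose M *v v = l *\<^sub>R v))"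

definition Eplus :: "real^2^2 \<Rightarrow> (real^2) set" where
  "Eplus M = {v. transpose M *v v = lamM M *\<^sub>R v}"

definition Eminus :: "real^2^2 \<Rightarrow> (real^2) set" where
  "Eminus M = {v. transpose M *v v = inverse (lamM M) *\<^sub>R v}"

definition plus_part :: "real^2^2 \<Rightarrow> real^2 \<Rightarrow> real^2" where
  "plus_part M y = (THE u. u \<in> Eplus M \<and> y - u \<in> Eminus M)"

definition minus_part :: "real^2^2 \<Rightarrow> real^2 \<Rightarrow> real^2" where
  "minus_part M y = y - plus_part M y"

definition normM :: "real^2^2 \<Rightarrow> real^2 \<Rightarrow> real" where
  "normM M y = l1r (plus_part M y) - l1r (minus_part M y)"

definition strip :: "real \<Rightarrow> (complex^2) set" where
  "strip r = {z. \<forall>i. \<bar>Im (z$i)\<bar> < r}"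

definition holo2 :: "(complex^2 \<Rightarrow> complex^2) \<Rightarrow> (complex^2) set \<Rightarrow> bool" where
  "holo2 F S \<longleftrightarrow> (\<forall>z\<in>S. \<exists>D. (F has_derivative D) (at z) \<and> (\<forall>c v. D (c *s v) = c *s D v))"

definition in_Br :: "real \<Rightarrow> (real^2 \<Rightarrow> real^2) \<Rightarrow> (complex^2 \<Rightarrow> complex^2) \<Rightarrow> bool" where
  "in_Br r \<psi> \<Psi> \<longleftrightarrow>
     (\<forall>x k. \<psi> (x + ivec k) = \<psi> x) \<and>
     (\<forall>x. \<Psi> (cvec x) = cvec (\<psi> x)) \<and>
     holo2 \<Psi> (strip r) \<and> bounded (\<Psi> ` strip r)"

definition dTM :: "real \<Rightarrow> (complex^2 \<Rightarrow> complex^2) \<Rightarrow> ereal" where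
  "dTM r \<Psi> = (SUP z\<in>strip r. ereal (l1c (\<Psi> z))) +
               (SUP z\<in>strip r. ereal (opnorm1 (frechet_derivative \<Psi> (at z))))"

definition Icoef :: "real^2^2 \<Rightarrow> (real^2 \<Rightarrow> real^2) \<Rightarrow> int^2 \<Rightarrow> int^2 \<Rightarrow> complex" where
  "Icoef M \<psi> n1 n2 = integral (cbox (0::real^2) 1)
     (\<lambda>x. cis (2 * pi * (ivec n2 \<bullet> (M *v x + \<psi> x) - ivec n1 \<bullet> x)))"

end

theory Submission
  imports Defs "HOL-Complex_Analysis.Complex_Analysis"
begin

no_notation fps_nth (infixl "$" 75)


lemma strip1_convex: "convex {z::complex. \<bar>Im z\<bar> < r}"
proof -
  have "{z::complex. \<bar>Im z\<bar> < r} = {z. Im z < r} \<inter> {z. Im z > -r}" by auto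
  then show ?thesis by (simp add: convex_halfspace_Im_lt convex_halfspace_Im_gt convex_Int)
qed

lemma strip1_open: "open {z::complex. \<bar>Im z\<bar> < r}"
proof -
  have "{z::complex. \<bar>Im z\<bar> < r} = {z. Im z < r} \<inter> {z. Im z > -r}" by auto
  then show ?thesis by (simp add: open_halfspace_Im_lt open_halfspace_Im_gt open_Int)
qed

lemma shift1:
  fixes h :: "complex \<Rightarrow> complex" and r s :: real
  assumes hol: "h holomorphic_on {z. \<bar>Im z\<bar> < r}"
    and per: "\<And>z. \<bar>Im z\<bar> < r \<Longrightarrow> h (z + 1) = h z" and s: "\<bar>s\<bar> < r"
  shows "integral {0..1} (\<lambda>x. h (of_real x)) = integral {0..1} (\<lambda>x. h (of_real x + \<i> * of_real s))"
proof -
  define S where "S = {z::complex. \<bar>Im z\<bar> < r}"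
  have cS: "convex S" and oS: "open S" unfolding S_def by (rule strip1_convex, rule strip1_open)
  have r0: "r > 0" using s by linarith
  define a where "a = \<i> * of_real s"
  have inS: "0 \<in> S" "1 \<in> S" "a \<in> S" "1 + a \<in> S" using r0 s by (auto simp: S_def a_def)
  have seg: "path_image (linepath u v) \<subseteq> S" if "u \<in> S" "v \<in> S" for u v
    using closed_segment_subset[OF that cS] by simp
  have ci: "h contour_integrable_on linepath u v" if "u \<in> S" "v \<in> S" for u v
    by (rule contour_integrable_holomorphic_simple[OF hol[folded S_def] oS _ seg[OF that]]) simp
  define g where "g = linepath 0 1 +++ linepath 1 (1 + a) +++ linepath (1 + a) a +++ linepath a 0"
  have vg: "valid_path g" unfolding g_def by simp
  have pg: "path_image g \<subseteq> S" unfolding g_def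
    using seg inS by (simp add: path_image_join)
  have "(h has_contour_integral 0) g"
    by (rule Cauchy_theorem_convex_simple[OF hol[folded S_def] cS vg pg]) (simp add: g_def)
  then have z: "contour_integral g h = 0" by (rule contour_integral_unique)
  have split: "contour_integral g h = contour_integral (linepath 0 1) h + contour_integral (linepath 1 (1 + a)) h
      + contour_integral (linepath (1 + a) a) h + contour_integral (linepath a 0) h"
    unfolding g_def using inS ci
    by (simp add: valid_path_join contour_integrable_joinI)
  have e1: "contour_integral (linepath 0 1) h = integral {0..1} (\<lambda>x. h (of_real x))"
    by (simp add: contour_integral_integral scaleR_conv_of_real)
  have e3: "contour_integral (linepath (1 + a) a) h = - integral {0..1} (\<lambda>x. h (of_real x + a))"
  proof -
    have "contour_integral (linepath (1 + a) a) h = - contour_integral (linepath a (1 + a)) h"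
      by (metis contour_integral_reversepath reversepath_linepath valid_path_linepath)
    also have "contour_integral (linepath a (1 + a)) h = integral {0..1} (\<lambda>x. h (of_real x + a))"
      by (simp add: contour_integral_integral linepath_def algebra_simps scaleR_conv_of_real)
    finally show ?thesis .
  qed
  have e24: "contour_integral (linepath 1 (1 + a)) h + contour_integral (linepath a 0) h = 0"
  proof -
    have "contour_integral (linepath a 0) h = - contour_integral (linepath 0 a) h"
      by (metis contour_integral_reversepath reversepath_linepath valid_path_linepath)
    moreover have "contour_integral (linepath 1 (1 + a)) h = contour_integral (linepath 0 a) h"
    proof -
      have "contour_integral (linepath 1 (1 + a)) h = integral {0..1} (\<lambda>x. h (linepath 1 (1 + a) x) * a)"
        by (simp add: contour_integral_integral)
      also have "\<dots> = integral {0..1} (\<lambda>x. h (linepath 0 a x) * a)"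
      proof (rule integral_cong)
        fix x :: real assume x: "x \<in> {0..1}"
        have "linepath 1 (1 + a) x = linepath 0 a x + 1" by (simp add: linepath_def algebra_simps)
        moreover have "linepath 0 a x \<in> S" using seg[OF inS(1) inS(3)] x
          unfolding path_image_def by blast
        ultimately show "h (linepath 1 (1 + a) x) * a = h (linepath 0 a x) * a"
          using per by (simp add: S_def)
      qed
      also have "\<dots> = contour_integral (linepath 0 a) h"
        by (simp add: contour_integral_integral)
      finally show ?thesis .
    qed
    ultimately show ?thesis by simp
  qed
  from z split have "0 = contour_integral (linepath 0 1) h + contour_integral (linepath (1 + a) a) h
     + (contour_integral (linepath 1 (1 + a)) h + contour_integral (linepath a 0) h)"
    by algebra
  then have "integral {0..1} (\<lambda>x. h (of_real x)) - integral {0..1} (\<lambda>x. h (of_real x + a)) = 0"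
    unfolding e1 e3 e24 by simp
  then show ?thesis by (simp add: a_def)
qed


lemma holo_slice:
  fixes \<Psi> :: "complex^2 \<Rightarrow> complex^2" and a v :: "complex^2"
  assumes H: "holo2 \<Psi> S" and T: "\<And>z. z \<in> T \<Longrightarrow> a + z *s v \<in> S"
  shows "(\<lambda>z. \<Psi> (a + z *s v) $ j) holomorphic_on T"
  unfolding holomorphic_on_def
proof
  fix z assume z: "z \<in> T"
  obtain D where D: "(\<Psi> has_derivative D) (at (a + z *s v))" and Dl: "\<And>c w. D (c *s w) = c *s D w"
    using H T[OF z] unfolding holo2_def by blast
  have lin: "linear (\<lambda>h::complex. h *s v)"
    by (rule linearI) (auto simp: vec_eq_iff algebra_simps)
  have d1: "((\<lambda>h::complex. a + h *s v) has_derivative (\<lambda>h. h *s v)) (at z)"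
    using has_derivative_add_const[OF bounded_linear_imp_has_derivative[OF lin[unfolded linear_conv_bounded_linear]], of a "at z"]
    by (simp add: add.commute)
  have d2: "((\<lambda>h. \<Psi> (a + h *s v)) has_derivative (\<lambda>h. D (h *s v))) (at z)"
    using has_derivative_compose[OF d1 D] by (simp add: o_def)
  have d3: "((\<lambda>h. \<Psi> (a + h *s v) $ j) has_derivative (\<lambda>h. D (h *s v) $ j)) (at z)"
    by (rule bounded_linear.has_derivative[OF bounded_linear_vec_nth d2])
  have eq: "(\<lambda>h. D (h *s v) $ j) = (*) (D v $ j)"
    by (auto simp: Dl mult.commute)
  have "((\<lambda>h. \<Psi> (a + h *s v) $ j) has_field_derivative (D v $ j)) (at z)"
    unfolding has_field_derivative_def using d3 eq by simp
  then show "(\<lambda>h. \<Psi> (a + h *s v) $ j) field_differentiable at z within T"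
    unfolding field_differentiable_def by (blast intro: has_field_derivative_at_within)
qed

lemma cvec_vector[simp]: "cvec (vector [a, b]) = vector [of_real a, of_real b]"
  by (simp add: cvec_def vec_eq_iff forall_2)

lemma ivec_vector[simp]: "ivec (vector [a, b]) = vector [of_int a, of_int b]"
  by (simp add: ivec_def vec_eq_iff forall_2)

lemma vector_add2: "vector [a, b] + vector [c, d] = (vector [a + c, b + d] :: 'a::monoid_add^2)"
  by (simp add: vec_eq_iff forall_2)

lemma slice1: "vector [z, c] = vector [0, c] + z *s (vector [1, 0] :: complex^2)"
  by (simp add: vec_eq_iff forall_2)

lemma slice2: "vector [c, z] = vector [c, 0] + z *s (vector [0, 1] :: complex^2)"
  by (simp add: vec_eq_iff forall_2)

lemma strip_vector: "vector [z1, z2] \<in> strip r \<longleftrightarrow> \<bar>Im z1\<bar> < r \<and> \<bar>Im z2\<bar> < r"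
  by (simp add: strip_def forall_2)

lemma S1_connected: "connected {z::complex. \<bar>Im z\<bar> < r}"
proof -
  have "{z::complex. \<bar>Im z\<bar> < r} = {z. Im z < r} \<inter> {z. Im z > -r}" by auto
  then have "convex {z::complex. \<bar>Im z\<bar> < r}"
    by (simp add: convex_halfspace_Im_lt convex_halfspace_Im_gt convex_Int)
  then show ?thesis by (rule convex_connected)
qed

lemma S1_open: "open {z::complex. \<bar>Im z\<bar> < r}"
proof -
  have "{z::complex. \<bar>Im z\<bar> < r} = {z. Im z < r} \<inter> {z. Im z > -r}" by auto
  then show ?thesis by (simp add: open_halfspace_Im_lt open_halfspace_Im_gt open_Int)
qed

lemma zero_on_strip:
  fixes F :: "complex \<Rightarrow> complex"
  assumes "F holomorphic_on {z. \<bar>Im z\<bar> < r}" "\<And>x::real. F (of_real x) = 0" "\<bar>Im z\<bar> < r"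
  shows "F z = 0"
proof (rule analytic_continuation[OF assms(1) S1_open S1_connected, of "\<real>" 0])
  show "\<real> \<subseteq> {z. \<bar>Im z\<bar> < r}" using assms(3) by (auto elim!: Reals_cases)
  show "0 \<in> {z::complex. \<bar>Im z\<bar> < r}" using assms(3) by auto
  show "(0::complex) islimpt \<real>"
    unfolding islimpt_approachable
  proof (intro allI impI)
    fix e :: real assume "e > 0"
    then show "\<exists>x'\<in>\<real>. x' \<noteq> 0 \<and> dist x' (0::complex) < e"
      by (intro bexI[where x="complex_of_real (e/2)"]) (auto simp: dist_norm norm_of_real)
  qed
  show "\<And>w. w \<in> \<real> \<Longrightarrow> F w = 0" using assms(2) by (auto elim!: Reals_cases)
  show "z \<in> {z. \<bar>Im z\<bar> < r}" using assms(3) by simp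
qed

lemma Psi_periodic:
  assumes B: "in_Br r \<psi> \<Psi>" and z1: "\<bar>Im z1\<bar> < r" and z2: "\<bar>Im z2\<bar> < r"
  shows "\<Psi> (vector [z1 + 1, z2]) = \<Psi> (vector [z1, z2])"
    and "\<Psi> (vector [z1, z2 + 1]) = \<Psi> (vector [z1, z2])"
proof -
  have per: "\<And>x k. \<psi> (x + ivec k) = \<psi> x" and ext: "\<And>x. \<Psi> (cvec x) = cvec (\<psi> x)"
    and H: "holo2 \<Psi> (strip r)" using B unfolding in_Br_def by auto
  let ?S = "{z::complex. \<bar>Im z\<bar> < r}"
  have r0: "r > 0" using z1 by linarith
  have hs1: "(\<lambda>z. \<Psi> (vector [z + d, c]) $ j) holomorphic_on ?S" if "\<bar>Im c\<bar> < r" "Im d = 0" for c d j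
  proof -
    have "(\<lambda>z. \<Psi> (vector [d, c] + z *s vector [1, 0]) $ j) holomorphic_on ?S"
      by (rule holo_slice[OF H]) (use that in \<open>simp add: strip_def forall_2\<close>)
    moreover have "\<And>z. vector [d, c] + z *s vector [1, 0] = (vector [z + d, c] :: complex^2)"
      by (simp add: vec_eq_iff forall_2)
    ultimately show ?thesis by simp
  qed
  have hs2: "(\<lambda>z. \<Psi> (vector [c, z + d]) $ j) holomorphic_on ?S" if "\<bar>Im c\<bar> < r" "Im d = 0" for c d j
  proof -
    have "(\<lambda>z. \<Psi> (vector [c, d] + z *s vector [0, 1]) $ j) holomorphic_on ?S"
      by (rule holo_slice[OF H]) (use that in \<open>simp add: strip_def forall_2\<close>)
    moreover have "\<And>z. vector [c, d] + z *s vector [0, 1] = (vector [c, z + d] :: complex^2)"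
      by (simp add: vec_eq_iff forall_2)
    ultimately show ?thesis by simp
  qed
  have hs1': "(\<lambda>z. \<Psi> (vector [z, c]) $ j) holomorphic_on ?S" if "\<bar>Im c\<bar> < r" for c j
    using hs1[OF that, of 0] by simp
  have hs2': "(\<lambda>z. \<Psi> (vector [c, z]) $ j) holomorphic_on ?S" if "\<bar>Im c\<bar> < r" for c j
    using hs2[OF that, of 0] by simp
  have real1: "\<Psi> (vector [of_real x + 1, of_real y]) = \<Psi> (vector [of_real x, of_real y])" for x y
  proof -
    have "\<Psi> (vector [of_real x + 1, of_real y]) = \<Psi> (cvec (vector [x, y] + ivec (vector [1, 0])))"
      by (simp add: vector_add2)
    also have "\<dots> = \<Psi> (cvec (vector [x, y]))" by (simp only: ext per)
    finally show ?thesis by simp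
  qed
  have real2: "\<Psi> (vector [of_real x, of_real y + 1]) = \<Psi> (vector [of_real x, of_real y])" for x y
  proof -
    have "\<Psi> (vector [of_real x, of_real y + 1]) = \<Psi> (cvec (vector [x, y] + ivec (vector [0, 1])))"
      by (simp add: vector_add2)
    also have "\<dots> = \<Psi> (cvec (vector [x, y]))" by (simp only: ext per)
    finally show ?thesis by simp
  qed
  have step1: "\<Psi> (vector [w + 1, of_real y]) $ j = \<Psi> (vector [w, of_real y]) $ j" if "\<bar>Im w\<bar> < r" for w y j
  proof -
    have "(\<lambda>z. \<Psi> (vector [z + 1, of_real y]) $ j - \<Psi> (vector [z, of_real y]) $ j) w = 0"
      by (rule zero_on_strip[OF _ _ that]) (use r0 in \<open>auto intro!: holomorphic_intros hs1 hs1' simp: real1\<close>)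
    then show ?thesis by simp
  qed
  have "\<Psi> (vector [z1 + 1, z2]) $ j = \<Psi> (vector [z1, z2]) $ j" for j
  proof -
    have "(\<lambda>z. \<Psi> (vector [z1 + 1, z]) $ j - \<Psi> (vector [z1, z]) $ j) z2 = 0"
      by (rule zero_on_strip[OF _ _ z2]) (use z1 in \<open>auto intro!: holomorphic_intros hs2' simp: step1\<close>)
    then show ?thesis by simp
  qed
  then show "\<Psi> (vector [z1 + 1, z2]) = \<Psi> (vector [z1, z2])" by (simp add: vec_eq_iff)
  have step2: "\<Psi> (vector [of_real x, w + 1]) $ j = \<Psi> (vector [of_real x, w]) $ j" if "\<bar>Im w\<bar> < r" for w x j
  proof -
    have "(\<lambda>z. \<Psi> (vector [of_real x, z + 1]) $ j - \<Psi> (vector [of_real x, z]) $ j) w = 0"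
      by (rule zero_on_strip[OF _ _ that]) (use r0 in \<open>auto intro!: holomorphic_intros hs2 hs2' simp: real2\<close>)
    then show ?thesis by simp
  qed
  have "\<Psi> (vector [z1, z2 + 1]) $ j = \<Psi> (vector [z1, z2]) $ j" for j
  proof -
    have "(\<lambda>z. \<Psi> (vector [z, z2 + 1]) $ j - \<Psi> (vector [z, z2]) $ j) z1 = 0"
      by (rule zero_on_strip[OF _ _ z1]) (use z2 in \<open>auto intro!: holomorphic_intros hs1' simp: step2\<close>)
    then show ?thesis by simp
  qed
  then show "\<Psi> (vector [z1, z2 + 1]) = \<Psi> (vector [z1, z2])" by (simp add: vec_eq_iff)
qed


lemma prod_UNIV_2: "prod f (UNIV::2 set) = f 1 * f 2"
  by (simp add: UNIV_2)

lemma integral_cart2_pair: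
  fixes G :: "real^2 \<Rightarrow> 'c::banach"
  assumes cont: "continuous_on (cbox 0 1) G"
  shows "integral (cbox 0 1) G = integral (cbox (0,0) (1,1)) (\<lambda>p. G (vector [fst p, snd p]))"
proof -
  define g :: "real \<times> real \<Rightarrow> real^2" where "g p = vector [fst p, snd p]" for p
  define h :: "real^2 \<Rightarrow> real \<times> real" where "h x = (x$1, x$2)" for x
  have hg: "h (g x) = x" for x by (simp add: g_def h_def)
  have gh: "g (h x) = x" for x by (simp add: g_def h_def vec_eq_iff forall_2)
  have lin: "linear g" by (rule linearI) (auto simp: g_def vec_eq_iff forall_2)
  have contg: "continuous (at x) g" for x using lin by (simp add: linear_continuous_at linear_conv_bounded_linear)
  have gimg: "g ` A = {x. h x \<in> A}" for A
    using hg gh by (auto simp: image_iff) (metis)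
  have himg: "h ` A = {x. g x \<in> A}" for A
    using hg gh by (auto simp: image_iff) (metis)
  have gbox: "g ` cbox u v = cbox (g u) (g v)" for u v
  proof -
    obtain u1 u2 v1 v2 where uv: "u = (u1,u2)" "v = (v1,v2)" by (cases u, cases v) auto
    show ?thesis unfolding gimg uv cbox_Pair_eq
      by (auto simp: h_def g_def mem_box_cart forall_2 cbox_interval less_eq_vec_def)
  qed
  have hbox: "h ` cbox u v = cbox (h u) (h v)" for u v
  proof -
    show ?thesis unfolding himg h_def cbox_Pair_eq
      by (auto simp: h_def g_def mem_box_cart forall_2 cbox_interval less_eq_vec_def)
  qed
  have cnt: "Henstock_Kurzweil_Integration.content (g ` cbox u v) = 1 * Henstock_Kurzweil_Integration.content (cbox u v)" for u v
  proof -
    obtain u1 u2 v1 v2 where uv: "u = (u1,u2)" "v = (v1,v2)" by (cases u, cases v) auto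
    have e: "cbox (g u) (g v) = {} \<longleftrightarrow> \<not> (u1 \<le> v1 \<and> u2 \<le> v2)"
    proof
      assume "cbox (g u) (g v) = {}"
      moreover have "u1 \<le> v1 \<and> u2 \<le> v2 \<Longrightarrow> g u \<in> cbox (g u) (g v)"
        by (simp add: mem_box_cart forall_2 uv g_def)
      ultimately show "\<not> (u1 \<le> v1 \<and> u2 \<le> v2)" by blast
    next
      assume "\<not> (u1 \<le> v1 \<and> u2 \<le> v2)"
      then show "cbox (g u) (g v) = {}"
        by (auto simp: mem_box_cart forall_2 uv g_def)
    qed
    have c2: "Henstock_Kurzweil_Integration.content (cbox u v) = (if u1 \<le> v1 then v1 - u1 else 0) * (if u2 \<le> v2 then v2 - u2 else 0)"
      unfolding uv content_Pair cbox_interval[symmetric] by simp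
    have c1: "Henstock_Kurzweil_Integration.content (g ` cbox u v) = (if u1 \<le> v1 \<and> u2 \<le> v2 then (v1 - u1) * (v2 - u2) else 0)"
      unfolding gbox content_cbox_if_cart e by (simp add: prod_UNIV_2 g_def uv)
    show ?thesis unfolding c1 c2 by auto
  qed
  have int: "(G has_integral integral (cbox 0 1) G) (cbox 0 1)"
    using integrable_continuous[OF cont] by (simp add: has_integral_integral)
  have "((\<lambda>x. G (g x)) has_integral (1 / 1) *\<^sub>R integral (cbox 0 1) G) (h ` cbox 0 1)"
    by (rule has_integral_twiddle[OF _ hg gh contg _ _ cnt int]) (simp, use gbox hbox in blast, use gbox hbox in blast)
  moreover have "h ` cbox 0 1 = cbox (0,0) (1,1)" unfolding hbox by (simp add: h_def)
  ultimately show ?thesis by (simp add: integral_unique g_def)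
qed


lemma vector2_chi: "(vector [a, b] :: 'a::zero^2) = (\<chi> i. if i = 1 then a else b)"
  by (simp add: vec_eq_iff forall_2)

lemma continuous_on_vector2[continuous_intros]:
  fixes f g :: "'b::topological_space \<Rightarrow> 'a::{real_normed_vector}"
  assumes "continuous_on S f" "continuous_on S g"
  shows "continuous_on S (\<lambda>x. vector [f x, g x] :: 'a^2)"
proof -
  have "continuous_on S (\<lambda>x. if i = 1 then f x else g x)" for i :: 2
    using assms by (cases "i = 1") auto
  then show ?thesis unfolding vector2_chi by (auto intro!: continuous_intros)
qed

lemma cont_shifted:
  fixes f :: "complex^2 \<Rightarrow> complex"
  assumes cont: "continuous_on (strip r) f" and "\<bar>c1\<bar> < r" "\<bar>c2\<bar> < r"
  shows "continuous_on A (\<lambda>p::real\<times>real. f (vector [of_real (fst p) + \<i> * of_real c1, of_real (snd p) + \<i> * of_real c2]))"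
  by (rule continuous_on_compose2[OF cont]) (use assms in \<open>auto intro!: continuous_intros simp: strip_vector\<close>)

lemma shift2:
  fixes f :: "complex^2 \<Rightarrow> complex"
  assumes cont: "continuous_on (strip r) f"
    and h1: "\<And>c. \<bar>Im c\<bar> < r \<Longrightarrow> (\<lambda>z. f (vector [z, c])) holomorphic_on {z. \<bar>Im z\<bar> < r}"
    and h2: "\<And>c. \<bar>Im c\<bar> < r \<Longrightarrow> (\<lambda>z. f (vector [c, z])) holomorphic_on {z. \<bar>Im z\<bar> < r}"
    and p1: "\<And>z1 z2. \<bar>Im z1\<bar> < r \<Longrightarrow> \<bar>Im z2\<bar> < r \<Longrightarrow> f (vector [z1 + 1, z2]) = f (vector [z1, z2])"
    and p2: "\<And>z1 z2. \<bar>Im z1\<bar> < r \<Longrightarrow> \<bar>Im z2\<bar> < r \<Longrightarrow> f (vector [z1, z2 + 1]) = f (vector [z1, z2])"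
    and w1: "\<bar>w1\<bar> < r" and w2: "\<bar>w2\<bar> < r"
  shows "integral (cbox 0 1) (\<lambda>x. f (cvec x)) =
    integral {0..1} (\<lambda>b. integral {0..1} (\<lambda>a. f (vector [of_real a + \<i> * of_real w1, of_real b + \<i> * of_real w2])))"
proof -
  have r0: "r > 0" using w1 by linarith
  have c0: "continuous_on A (\<lambda>p::real\<times>real. f (vector [of_real (fst p) + \<i> * of_real 0, of_real (snd p) + \<i> * of_real 0]))" for A
    by (rule cont_shifted[OF cont]) (use r0 in auto)
  have c2: "continuous_on A (\<lambda>p::real\<times>real. f (vector [of_real (fst p) + \<i> * of_real 0, of_real (snd p) + \<i> * of_real w2]))" for A
    by (rule cont_shifted[OF cont]) (use r0 w2 in auto)
  have contR: "continuous_on (cbox 0 1) (\<lambda>x. f (cvec x))"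
    by (rule continuous_on_compose2[OF cont]) (use r0 in \<open>auto simp: cvec_def strip_def intro!: continuous_intros\<close>)
  have "integral (cbox 0 1) (\<lambda>x. f (cvec x)) = integral (cbox (0,0) (1,1)) (\<lambda>p. f (cvec (vector [fst p, snd p])))"
    by (rule integral_cart2_pair[OF contR])
  also have "\<dots> = integral (cbox (0,0) (1,1)) (\<lambda>p. f (vector [of_real (fst p), of_real (snd p)]))"
    by simp
  also have "\<dots> = integral {0..1} (\<lambda>a. integral {0..1} (\<lambda>b. f (vector [of_real a, of_real b])))"
    using integral_prod_continuous[of 0 0 1 1 "\<lambda>p. f (vector [of_real (fst p), of_real (snd p)])"] c0
    by (simp add: cbox_interval)
  also have "\<dots> = integral {0..1} (\<lambda>a. integral {0..1} (\<lambda>b. f (vector [of_real a, of_real b + \<i> * of_real w2])))"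
  proof (rule integral_cong)
    fix a :: real
    show "integral {0..1} (\<lambda>b. f (vector [of_real a, of_real b])) =
          integral {0..1} (\<lambda>b. f (vector [of_real a, of_real b + \<i> * of_real w2]))"
      by (rule shift1[OF h2 p2 w2]) (use r0 in auto)
  qed
  also have "\<dots> = integral {0..1} (\<lambda>b. integral {0..1} (\<lambda>a. f (vector [of_real a, of_real b + \<i> * of_real w2])))"
    using integral_swap_continuous[of 0 0 1 1 "\<lambda>a b. f (vector [of_real a, of_real b + \<i> * of_real w2])"] c2[of "cbox (0,0) (1,1)"]
    by (simp add: cbox_interval split_beta)
  also have "\<dots> = integral {0..1} (\<lambda>b. integral {0..1} (\<lambda>a. f (vector [of_real a + \<i> * of_real w1, of_real b + \<i> * of_real w2])))"
  proof (rule integral_cong)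
    fix b :: real
    have Ic: "\<bar>Im (of_real b + \<i> * of_real w2)\<bar> < r" using w2 by simp
    show "integral {0..1} (\<lambda>a. f (vector [of_real a, of_real b + \<i> * of_real w2])) =
          integral {0..1} (\<lambda>a. f (vector [of_real a + \<i> * of_real w1, of_real b + \<i> * of_real w2]))"
      by (rule shift1[OF h1[OF Ic] _ w1]) (use Ic in \<open>auto intro: p1\<close>)
  qed
  finally show ?thesis .
qed


lemma l1r_add: "l1r (x + y) \<le> l1r x + l1r y"
  unfolding l1r_def by simp
lemma l1r_diff: "l1r (x - y) \<le> l1r x + l1r y"
  unfolding l1r_def by simp
lemma l1r_scale: "l1r (c *\<^sub>R x) = \<bar>c\<bar> * l1r x"
  unfolding l1r_def by (simp add: abs_mult algebra_simps)
lemma l1r_nonneg: "l1r x \<ge> 0"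
  unfolding l1r_def by simp
lemma l1r_diff_ge: "l1r (x - y) \<ge> l1r x - l1r y"
  unfolding l1r_def by simp

lemma l1r_matvec: "l1r (B *v y) \<le> (\<bar>B$1$1\<bar> + \<bar>B$1$2\<bar> + \<bar>B$2$1\<bar> + \<bar>B$2$2\<bar>) * l1r y"
proof -
  have e: "(B *v y)$i = B$i$1 * y$1 + B$i$2 * y$2" for i
    by (simp add: matrix_vector_mult_def sum_2)
  have a: "\<bar>B$i$1 * y$1 + B$i$2 * y$2\<bar> \<le> \<bar>B$i$1\<bar> * \<bar>y$1\<bar> + \<bar>B$i$2\<bar> * \<bar>y$2\<bar>" for i
    by (metis abs_mult abs_triangle_ineq)
  have "l1r (B *v y) \<le> \<bar>B$1$1\<bar> * \<bar>y$1\<bar> + \<bar>B$1$2\<bar> * \<bar>y$2\<bar> + (\<bar>B$2$1\<bar> * \<bar>y$1\<bar> + \<bar>B$2$2\<bar> * \<bar>y$2\<bar>)"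
    unfolding l1r_def e using a[of 1] a[of 2] by linarith
  also have "\<dots> \<le> (\<bar>B$1$1\<bar> + \<bar>B$1$2\<bar> + \<bar>B$2$1\<bar> + \<bar>B$2$2\<bar>) * l1r y"
    unfolding l1r_def by (simp add: algebra_simps mult_left_mono)
  finally show ?thesis .
qed

lemma cayley_hamilton2:
  fixes M :: "real^2^2"
  assumes "det M = 1"
  shows "transpose M *v (transpose M *v y) = (M$1$1 + M$2$2) *\<^sub>R (transpose M *v y) - y"
  using assms unfolding det_2
  by (simp add: vec_eq_iff forall_2 matrix_vector_mult_def sum_2 transpose_def algebra_simps)

lemma trace_gt2:
  fixes M :: "real^2^2"
  assumes det: "det M = 1" and hyp: "hyperbolic M"
  shows "\<bar>M$1$1 + M$2$2\<bar> > 2"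
proof (rule ccontr)
  assume "\<not> ?thesis"
  then have t2: "\<bar>M$1$1 + M$2$2\<bar> \<le> 2" by simp
  define a where "a = (M$1$1 + M$2$2) / 2"
  have "\<bar>a\<bar> \<le> 1" using t2 unfolding a_def by simp
  then have a1: "a^2 \<le> 1" by (metis abs_ge_zero power2_abs power_le_one)
  define \<sigma> where "\<sigma> = sqrt (1 - a^2)"
  have s2: "\<sigma>^2 = 1 - a^2" unfolding \<sigma>_def using a1 by simp
  define l where "l = complex_of_real a + \<i> * complex_of_real \<sigma>"
  have "cmod l = 1" unfolding l_def cmod_def using s2 by simp
  moreover have "is_eigenvalue_c M l"
  proof -
    have dM: "M$1$1 * M$2$2 - M$1$2 * M$2$1 = 1" using det unfolding det_2 .
    have dMc: "complex_of_real (M$1$1) * complex_of_real (M$2$2) - complex_of_real (M$1$2) * complex_of_real (M$2$1) = 1"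
      using arg_cong[OF dM, of complex_of_real] by simp
    have "det (mat l - (\<chi> i j. complex_of_real (M$i$j))) =
      (l - complex_of_real (M$1$1)) * (l - complex_of_real (M$2$2)) - complex_of_real (M$1$2) * complex_of_real (M$2$1)"
      unfolding det_2 by (simp add: mat_def)
    also have "\<dots> = l^2 - 2 * complex_of_real a * l + 1"
      using dMc unfolding a_def by (simp add: algebra_simps power2_eq_square)
    also have "\<dots> = (l - complex_of_real a)^2 + complex_of_real (1 - a^2)"
      by (simp add: algebra_simps power2_eq_square)
    also have "\<dots> = 0" unfolding l_def using s2
      by (simp add: power_mult_distrib flip: of_real_power)
    finally show ?thesis unfolding is_eigenvalue_c_def .
  qed
  ultimately show False using hyp unfolding hyperbolic_def by blast
qed

lemma eigen_setup:
  fixes M :: "real^2^2"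
  assumes det: "det M = 1" and hyp: "hyperbolic M"
  obtains l where "\<bar>l\<bar> > 1" "\<And>y. transpose M *v (transpose M *v y) = (l + inverse l) *\<^sub>R (transpose M *v y) - y"
proof -
  define t where "t = M$1$1 + M$2$2"
  have t2: "\<bar>t\<bar> > 2" unfolding t_def by (rule trace_gt2[OF det hyp])
  define S where "S = sqrt (t^2 - 4)"
  have "2^2 < \<bar>t\<bar>^2" using t2 by (intro power_strict_mono) auto
  then have t4: "t^2 > 4" by simp
  have S2: "S^2 = t^2 - 4" "S \<ge> 0" unfolding S_def using t4 by auto
  define l where "l = (if t > 0 then (t + S) / 2 else (t - S) / 2)"
  have l1: "\<bar>l\<bar> > 1"
  proof (cases "t > 0")
    case True then show ?thesis unfolding l_def using t2 S2(2) by simp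
  next
    case False then show ?thesis unfolding l_def using t2 S2(2) by simp
  qed
  have q1: "(t + S)^2 - 2*t*(t+S) + 4 = 0" "(t - S)^2 - 2*t*(t-S) + 4 = 0"
    using S2(1) by (simp_all add: power2_eq_square algebra_simps)
  have l2: "2*l = t + S \<or> 2*l = t - S" unfolding l_def by auto
  have "(2*l)^2 - 2*t*(2*l) + 4 = 0" using l2 q1 by (elim disjE) simp_all
  then have lq: "l^2 - t * l + 1 = 0" by (simp add: power2_eq_square algebra_simps)
  have l0: "l \<noteq> 0" using l1 by auto
  have "t = l + inverse l"
  proof -
    have "t * l = l^2 + 1" using lq by simp
    then show ?thesis using l0 by (simp add: field_simps power2_eq_square)
  qed
  then show ?thesis using that[OF l1] cayley_hamilton2[OF det] unfolding t_def by metis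
qed

lemma normM_bound:
  fixes M :: "real^2^2"
  assumes det: "det M = 1" and hyp: "hyperbolic M"
  shows "\<exists>\<kappa>>0. \<exists>K>0. \<forall>y m. normM M (transpose M *v y - m) - normM M y \<ge> \<kappa> * l1r y - K * l1r m"
proof -
  obtain l where l1: "\<bar>l\<bar> > 1" and CH: "\<And>y. transpose M *v (transpose M *v y) = (l + inverse l) *\<^sub>R (transpose M *v y) - y"
    using eigen_setup[OF det hyp] by blast
  define A where "A = transpose M"
  define \<mu> where "\<mu> = inverse l"
  have CH': "A *v (A *v y) = (l + \<mu>) *\<^sub>R (A *v y) - y" for y using CH unfolding A_def \<mu>_def .
  have l0: "l \<noteq> 0" using l1 by auto
  have lmu: "l * \<mu> = 1" "\<mu> * l = 1" unfolding \<mu>_def using l0 by auto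
  have mu1: "\<bar>\<mu>\<bar> < 1" unfolding \<mu>_def using l1 by (simp add: abs_inverse inverse_less_1_iff)
  have lnm: "l - \<mu> \<noteq> 0" using l1 mu1 by auto
  define c where "c = inverse (l - \<mu>)"
  have c1: "c * (l - \<mu>) = 1" unfolding c_def using lnm by simp
  define P where "P y = c *\<^sub>R (A *v y - \<mu> *\<^sub>R y)" for y
  define Q where "Q y = c *\<^sub>R (l *\<^sub>R y - A *v y)" for y
  have PQ: "P y + Q y = y" for y
  proof -
    have "P y + Q y = (c * (l - \<mu>)) *\<^sub>R y" by (simp add: P_def Q_def algebra_simps)
    then show ?thesis using c1 by simp
  qed
  have AP: "A *v P y = l *\<^sub>R P y" for y
  proof -
    have "A *v P y = c *\<^sub>R (A *v (A *v y) - \<mu> *\<^sub>R (A *v y))" by (simp add: P_def algebra_simps)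
    also have "\<dots> = c *\<^sub>R (l *\<^sub>R (A *v y) - y)" by (simp add: CH' algebra_simps)
    also have "\<dots> = l *\<^sub>R P y" by (simp add: P_def algebra_simps lmu)
    finally show ?thesis .
  qed
  have AQ: "A *v Q y = \<mu> *\<^sub>R Q y" for y
  proof -
    have "A *v Q y = c *\<^sub>R (l *\<^sub>R (A *v y) - A *v (A *v y))" by (simp add: Q_def algebra_simps)
    also have "\<dots> = c *\<^sub>R (y - \<mu> *\<^sub>R (A *v y))" by (simp add: CH' algebra_simps)
    also have "\<dots> = \<mu> *\<^sub>R Q y" by (simp add: Q_def algebra_simps lmu)
    finally show ?thesis .
  qed
  have PA: "P (A *v y) = A *v P y" for y by (simp add: P_def algebra_simps)
  have QA: "Q (A *v y) = A *v Q y" for y by (simp add: Q_def algebra_simps)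
  have Pd: "P (u - v) = P u - P v" for u v by (simp add: P_def algebra_simps)
  have Qd: "Q (u - v) = Q u - Q v" for u v by (simp add: Q_def algebra_simps)
  have uniq: "l' = l" if "\<bar>l'\<bar> > 1" "v \<noteq> 0" "A *v v = l' *\<^sub>R v" for l' v
  proof -
    have "A *v (A *v v) = (l' * l') *\<^sub>R v" using that(3) by (simp add: algebra_simps)
    moreover have "A *v (A *v v) = ((l + \<mu>) * l' - 1) *\<^sub>R v" using that(3) CH'[of v] by (simp add: algebra_simps)
    ultimately have "(l' * l' - ((l + \<mu>) * l' - 1)) *\<^sub>R v = 0" by (simp add: algebra_simps)
    then have "l' * l' - ((l + \<mu>) * l' - 1) = 0" using that(2) by simp
    then have "(l' - l) * (l' - \<mu>) = 0" using lmu by (simp add: algebra_simps)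
    then show ?thesis using that(1) mu1 by auto
  qed
  have exv: "\<exists>v. v \<noteq> 0 \<and> A *v v = l *\<^sub>R v"
  proof (rule ccontr)
    assume "\<not> ?thesis"
    then have P0: "P y = 0" for y using AP by blast
    have Ay: "A *v y = \<mu> *\<^sub>R y" for y
    proof -
      have "Q y = y" using PQ[of y] P0[of y] by simp
      then show ?thesis using AQ[of y] by simp
    qed
    have e1: "A *v vector [1, 0] = vector [A$1$1, A$2$1]" "A *v vector [0, 1] = vector [A$1$2, A$2$2]"
      by (simp_all add: vec_eq_iff forall_2 matrix_vector_mult_def sum_2)
    have "A$1$1 = \<mu>" "A$2$1 = 0" "A$1$2 = 0" "A$2$2 = \<mu>"
      using Ay[of "vector [1,0]"] Ay[of "vector [0,1]"] unfolding e1 by (simp_all add: vec_eq_iff forall_2)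
    moreover have "det A = 1" unfolding A_def using det by (simp add: det_transpose)
    ultimately have "\<mu> * \<mu> = 1" unfolding det_2 by simp
    moreover have "\<bar>\<mu>\<bar> * \<bar>\<mu>\<bar> < 1 * 1" using mu1 by (intro mult_strict_mono') auto
    ultimately show False using abs_mult[of \<mu> \<mu>] by simp
  qed
  have lam: "lamM M = l"
    unfolding lamM_def A_def[symmetric]
  proof (rule the_equality)
    show "1 < \<bar>l\<bar> \<and> (\<exists>v. v \<noteq> 0 \<and> A *v v = l *\<^sub>R v)" using l1 exv by blast
  next
    fix l' assume "1 < \<bar>l'\<bar> \<and> (\<exists>v. v \<noteq> 0 \<and> A *v v = l' *\<^sub>R v)"
    then show "l' = l" using uniq by blast
  qed
  have pp: "plus_part M y = P y" for y
    unfolding plus_part_def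
  proof (rule the_equality)
    have yP: "y - P y = Q y" using PQ[of y] by (metis add_diff_cancel_left')
    show "P y \<in> Eplus M \<and> y - P y \<in> Eminus M"
      unfolding yP using AP AQ unfolding Eplus_def Eminus_def lam A_def[symmetric] \<mu>_def[symmetric]
      by simp
  next
    fix u assume u: "u \<in> Eplus M \<and> y - u \<in> Eminus M"
    define d where "d = u - P y"
    have u1: "A *v u = l *\<^sub>R u" and u2: "A *v (y - u) = \<mu> *\<^sub>R (y - u)"
      using u unfolding Eplus_def Eminus_def lam A_def[symmetric] \<mu>_def[symmetric] by auto
    have Ad1: "A *v d = l *\<^sub>R d"
    proof -
      have "A *v d = A *v u - A *v P y" unfolding d_def by (rule matrix_vector_mult_diff_distrib)
      also have "\<dots> = l *\<^sub>R d" unfolding u1 AP d_def by (rule scaleR_diff_right[symmetric])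
      finally show ?thesis .
    qed
    have Qy: "Q y = y - P y" using PQ[of y] by (metis add_diff_cancel_left')
    have dQ: "d = Q y - (y - u)" unfolding d_def Qy by simp
    have Ad2: "A *v d = \<mu> *\<^sub>R d"
    proof -
      have "A *v d = A *v Q y - A *v (y - u)" unfolding dQ by (rule matrix_vector_mult_diff_distrib)
      also have "\<dots> = \<mu> *\<^sub>R d" unfolding u2 AQ dQ by (rule scaleR_diff_right[symmetric])
      finally show ?thesis .
    qed
    from Ad1 Ad2 have "l *\<^sub>R d = \<mu> *\<^sub>R d" by metis
    then have "d = 0" using lnm by (metis right_minus_eq scaleR_cancel_right)
    then show "u = P y" unfolding d_def by simp
  qed
  have mp: "minus_part M y = Q y" for y
    unfolding minus_part_def pp using PQ[of y] by (metis add_diff_cancel_left')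
  have nM: "normM M y = l1r (P y) - l1r (Q y)" for y unfolding normM_def pp mp ..
  define a where "a = \<bar>A$1$1\<bar> + \<bar>A$1$2\<bar> + \<bar>A$2$1\<bar> + \<bar>A$2$2\<bar>"
  have a0: "a \<ge> 0" unfolding a_def by simp
  have Ab: "l1r (A *v y) \<le> a * l1r y" for y unfolding a_def by (rule l1r_matvec)
  define K where "K = \<bar>c\<bar> * (2 * a + \<bar>l\<bar> + \<bar>\<mu>\<bar>) + 1"
  have "\<bar>c\<bar> * (2 * a + \<bar>l\<bar> + \<bar>\<mu>\<bar>) \<ge> 0" using a0 by (intro mult_nonneg_nonneg) auto
  then have K0: "K > 0" unfolding K_def by linarith
  define \<kappa> where "\<kappa> = min (\<bar>l\<bar> - 1) (1 - \<bar>\<mu>\<bar>)"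
  have k0: "\<kappa> > 0" unfolding \<kappa>_def using l1 mu1 by simp
  have PmQm: "l1r (P m) + l1r (Q m) \<le> K * l1r m" for m
  proof -
    have "l1r (P m) \<le> \<bar>c\<bar> * (a * l1r m + \<bar>\<mu>\<bar> * l1r m)"
      unfolding P_def l1r_scale
      by (intro mult_left_mono order.trans[OF l1r_diff] add_mono Ab) (auto simp: l1r_scale)
    moreover have "l1r (Q m) \<le> \<bar>c\<bar> * (\<bar>l\<bar> * l1r m + a * l1r m)"
      unfolding Q_def l1r_scale
      by (intro mult_left_mono order.trans[OF l1r_diff] add_mono Ab) (auto simp: l1r_scale)
    ultimately have "l1r (P m) + l1r (Q m) \<le> (\<bar>c\<bar> * (2 * a + \<bar>l\<bar> + \<bar>\<mu>\<bar>)) * l1r m"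
      by (simp add: algebra_simps)
    also have "\<dots> \<le> K * l1r m" unfolding K_def using l1r_nonneg[of m] by (simp add: algebra_simps)
    finally show ?thesis .
  qed
  have main: "normM M (A *v y - m) - normM M y \<ge> \<kappa> * l1r y - K * l1r m" for y m
  proof -
    have Pz: "P (A *v y - m) = l *\<^sub>R P y - P m" using Pd PA AP by simp
    have Qz: "Q (A *v y - m) = \<mu> *\<^sub>R Q y - Q m" using Qd QA AQ by simp
    have i1: "l1r (P (A *v y - m)) \<ge> \<bar>l\<bar> * l1r (P y) - l1r (P m)"
      unfolding Pz using l1r_diff_ge[of "l *\<^sub>R P y" "P m"] by (simp add: l1r_scale)
    have i2: "l1r (Q (A *v y - m)) \<le> \<bar>\<mu>\<bar> * l1r (Q y) + l1r (Q m)"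
      unfolding Qz using l1r_diff[of "\<mu> *\<^sub>R Q y" "Q m"] by (simp add: l1r_scale)
    have i3: "l1r y \<le> l1r (P y) + l1r (Q y)" using l1r_add[of "P y" "Q y"] PQ[of y] by simp
    have k1: "\<kappa> * l1r (P y) \<le> (\<bar>l\<bar> - 1) * l1r (P y)"
      unfolding \<kappa>_def by (intro mult_right_mono l1r_nonneg) simp
    have k2: "\<kappa> * l1r (Q y) \<le> (1 - \<bar>\<mu>\<bar>) * l1r (Q y)"
      unfolding \<kappa>_def by (intro mult_right_mono l1r_nonneg) simp
    have k3: "\<kappa> * l1r y \<le> \<kappa> * l1r (P y) + \<kappa> * l1r (Q y)"
      using i3 k0 by (simp add: distrib_left[symmetric])
    show ?thesis unfolding nM using i1 i2 k1 k2 k3 PmQm[of m]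
      by (simp add: algebra_simps)
  qed
  show ?thesis using main k0 K0 unfolding A_def by blast
qed


lemma l1c_bounds: fixes v :: "complex^2" shows "norm v \<le> l1c v" "l1c v \<le> 2 * norm v" "cmod (v$i) \<le> l1c v"
proof -
  show "norm v \<le> l1c v" unfolding norm_vec_def l1c_def
    using L2_set_le_sum_abs[of "\<lambda>i. norm (v$i)" UNIV] by (simp add: sum_2)
  show "l1c v \<le> 2 * norm v" unfolding l1c_def using Finite_Cartesian_Product.norm_nth_le[where x=v and i=1] Finite_Cartesian_Product.norm_nth_le[where x=v and i=2] by simp
  show "cmod (v$i) \<le> l1c v" unfolding l1c_def using exhaust_2[of i] by auto
qed

lemma opnorm1_nonneg:
  assumes "bounded_linear L"
  shows "opnorm1 L \<ge> 0"
proof -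
  obtain K where K: "\<And>x. norm (L x) \<le> norm x * K" using bounded_linear.bounded[OF assms] by blast
  have L0: "L 0 = 0" using assms by (simp add: linear_simps)
  have "0 \<in> {l1c (L v) | v. l1c v \<le> 1}"
    by (rule CollectI, rule exI[of _ 0]) (simp add: L0 l1c_def)
  moreover have "bdd_above {l1c (L v) | v. l1c v \<le> 1}"
  proof (rule bdd_aboveI[of _ "2 * \<bar>K\<bar>"])
    fix x assume "x \<in> {l1c (L v) | v. l1c v \<le> 1}"
    then obtain v where v: "x = l1c (L v)" "l1c v \<le> 1" by blast
    have nv: "norm v \<le> 1" using l1c_bounds(1)[of v] v(2) by linarith
    have "norm v * K \<le> norm v * \<bar>K\<bar>" by (simp add: mult_left_mono)
    also have "\<dots> \<le> \<bar>K\<bar>" using nv by (simp add: mult_left_le_one_le)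
    finally have "norm v * K \<le> \<bar>K\<bar>" .
    then show "x \<le> 2 * \<bar>K\<bar>" using v(1) l1c_bounds(2)[of "L v"] K[of v] by linarith
  qed
  ultimately show ?thesis unfolding opnorm1_def by (rule cSup_upper)
qed

lemma Psi_bound:
  assumes B: "in_Br r \<Psi>' \<Psi>" and r: "r > 0" and d: "dTM r \<Psi> \<le> ereal \<delta>" and z: "z \<in> strip r"
  shows "l1c (\<Psi> z) \<le> \<delta>"
proof -
  have H: "holo2 \<Psi> (strip r)" using B unfolding in_Br_def by auto
  have z0: "0 \<in> strip r" using r by (simp add: strip_def)
  obtain D where "(\<Psi> has_derivative D) (at 0)" using H z0 unfolding holo2_def by blast
  then have "\<Psi> differentiable at 0" unfolding differentiable_def by blast
  then have "(\<Psi> has_derivative frechet_derivative \<Psi> (at 0)) (at 0)" by (simp add: frechet_derivative_works)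
  then have "bounded_linear (frechet_derivative \<Psi> (at 0))" by (rule has_derivative_bounded_linear)
  then have o0: "opnorm1 (frechet_derivative \<Psi> (at 0)) \<ge> 0" by (rule opnorm1_nonneg)
  define X where "X = (SUP z\<in>strip r. ereal (l1c (\<Psi> z)))"
  define Y where "Y = (SUP z\<in>strip r. ereal (opnorm1 (frechet_derivative \<Psi> (at z))))"
  have "ereal (opnorm1 (frechet_derivative \<Psi> (at 0))) \<le> Y" unfolding Y_def by (rule SUP_upper[OF z0])
  moreover have "(0::ereal) \<le> ereal (opnorm1 (frechet_derivative \<Psi> (at 0)))" using o0 by simp
  ultimately have Y0: "0 \<le> Y" by (rule order_trans[rotated])
  have "X \<le> X + Y" using Y0 by (simp add: add_increasing2)
  also have "\<dots> \<le> ereal \<delta>" using d unfolding dTM_def X_def Y_def .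
  finally have "X \<le> ereal \<delta>" .
  moreover have "ereal (l1c (\<Psi> z)) \<le> X" unfolding X_def by (rule SUP_upper[OF z])
  ultimately have "ereal (l1c (\<Psi> z)) \<le> ereal \<delta>" by (rule order_trans[rotated])
  then show ?thesis by simp
qed

lemma Psi_cont:
  assumes B: "in_Br r \<psi> \<Psi>"
  shows "continuous_on (strip r) \<Psi>"
proof -
  have H: "holo2 \<Psi> (strip r)" using B unfolding in_Br_def by auto
  show ?thesis
  proof (rule continuous_at_imp_continuous_on, rule ballI)
    fix z assume "z \<in> strip r"
    then obtain D where "(\<Psi> has_derivative D) (at z)" using H unfolding holo2_def by blast
    then show "isCont \<Psi> z" by (rule has_derivative_continuous)
  qed
qed

lemma Psi_slices:
  fixes \<Psi> :: "complex^2 \<Rightarrow> complex^2"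
  assumes B: "in_Br r \<psi> \<Psi>" and c: "\<bar>Im c\<bar> < r"
  shows "(\<lambda>z. \<Psi> (vector [z, c]) $ j) holomorphic_on {z. \<bar>Im z\<bar> < r}"
    and "(\<lambda>z. \<Psi> (vector [c, z]) $ j) holomorphic_on {z. \<bar>Im z\<bar> < r}"
proof -
  have H: "holo2 \<Psi> (strip r)" using B unfolding in_Br_def by auto
  have "(\<lambda>z. \<Psi> (vector [0, c] + z *s vector [1, 0]) $ j) holomorphic_on {z. \<bar>Im z\<bar> < r}"
    by (rule holo_slice[OF H]) (use c in \<open>simp add: strip_def forall_2\<close>)
  then show "(\<lambda>z. \<Psi> (vector [z, c]) $ j) holomorphic_on {z. \<bar>Im z\<bar> < r}"
    by (simp add: slice1[symmetric])
  have "(\<lambda>z. \<Psi> (vector [c, 0] + z *s vector [0, 1]) $ j) holomorphic_on {z. \<bar>Im z\<bar> < r}"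
    by (rule holo_slice[OF H]) (use c in \<open>simp add: strip_def forall_2\<close>)
  then show "(\<lambda>z. \<Psi> (vector [c, z]) $ j) holomorphic_on {z. \<bar>Im z\<bar> < r}"
    by (simp add: slice2[symmetric])
qed

lemma exp_int_shift:
  assumes "k \<in> \<int>"
  shows "exp (2 * of_real pi * \<i> * (X + complex_of_real k)) = exp (2 * of_real pi * \<i> * X)"
proof -
  obtain j where j: "k = of_int j" using assms by (auto elim: Ints_cases)
  have "exp (2 * of_real pi * \<i> * (X + complex_of_real k)) = exp (2 * of_real pi * \<i> * X) * exp (2 * of_real pi * \<i> * of_int j)"
    by (simp add: j distrib_left exp_add)
  also have "exp (2 * of_real pi * \<i> * of_int j) = 1"
    using exp_integer_2pi[of "of_int j"] by (simp add: mult.commute mult.left_commute)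
  finally show ?thesis by simp
qed

lemma integral_norm_le01:
  fixes F :: "real \<Rightarrow> 'a::banach"
  assumes "\<And>x. x \<in> {0..1} \<Longrightarrow> norm (F x) \<le> B"
  shows "norm (integral {0..1} F) \<le> B"
proof (cases "F integrable_on {0..1}")
  case True
  have B0: "0 \<le> B" using assms[of 0] by (meson atLeastAtMost_iff norm_ge_zero order_trans zero_le_one order_refl)
  have "norm (integral {0..1} F) \<le> B * Henstock_Kurzweil_Integration.content (cbox (0::real) 1)"
    by (rule has_integral_bound[OF B0]) (use True assms in \<open>auto simp: cbox_interval\<close>)
  then show ?thesis by simp
next
  case False
  then show ?thesis using assms[of 0] by (simp add: not_integrable_integral) (meson norm_ge_zero order_trans)
qed


lemma re_2pii: "Re (2 * complex_of_real pi * \<i> * w) = - (2 * pi * Im w)"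
  by simp

lemma Icoef_bound:
  fixes M :: "real^2^2" and \<psi> :: "real^2 \<Rightarrow> real^2" and \<Psi> :: "complex^2 \<Rightarrow> complex^2"
  assumes SL: "SL2Z M" and B: "in_Br r \<psi> \<Psi>" and r: "r > 0" and d: "dTM r \<Psi> \<le> ereal \<delta>"
  shows "cmod (Icoef M \<psi> n1 n2) \<le>
     exp (- 2 * pi * (r / 2) * l1r (transpose M *v ivec n2 - ivec n1) + 2 * pi * \<delta> * l1r (ivec n2))"
proof -
  define m where "m = transpose M *v ivec n2 - ivec n1"
  define nn where "nn = ivec n2"
  define \<rho> where "\<rho> = r / 2"
  define f where "f z = exp (2 * of_real pi * \<i> * (of_real (m$1) * z$1 + of_real (m$2) * z$2
       + of_real (nn$1) * \<Psi> z $ 1 + of_real (nn$2) * \<Psi> z $ 2))" for z :: "complex^2"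
  have Mint: "M$i$j \<in> \<int>" for i j using SL unfolding SL2Z_def by auto
  have mInt: "m$i \<in> \<int>" for i
    unfolding m_def by (simp add: matrix_vector_mult_def sum_2 transpose_def ivec_def Mint)
  have per: "\<And>x k. \<psi> (x + ivec k) = \<psi> x" and ext: "\<And>x. \<Psi> (cvec x) = cvec (\<psi> x)"
    using B unfolding in_Br_def by auto
  have cvec_nth: "cvec x $ i = of_real (x $ i)" for x i by (simp add: cvec_def)
  have Ieq: "Icoef M \<psi> n1 n2 = integral (cbox 0 1) (\<lambda>x. f (cvec x))"
    unfolding Icoef_def
  proof (rule integral_cong)
    fix x :: "real^2"
    have re: "ivec n2 \<bullet> (M *v x + \<psi> x) - ivec n1 \<bullet> x = m$1 * x$1 + m$2 * x$2 + nn$1 * \<psi> x $ 1 + nn$2 * \<psi> x $ 2"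
      unfolding m_def nn_def
      by (simp add: inner_vec_def sum_2 matrix_vector_mult_def transpose_def algebra_simps)
    show "cis (2 * pi * (ivec n2 \<bullet> (M *v x + \<psi> x) - ivec n1 \<bullet> x)) = f (cvec x)"
      unfolding re f_def ext cis_conv_exp cvec_nth by (simp add: algebra_simps)
  qed
  have Pc: "continuous_on (strip r) \<Psi>" by (rule Psi_cont[OF B])
  have cont: "continuous_on (strip r) f"
    unfolding f_def by (intro continuous_intros Pc continuous_on_compose2[OF Pc]) auto
  have h1: "(\<lambda>z. f (vector [z, c])) holomorphic_on {z. \<bar>Im z\<bar> < r}" if "\<bar>Im c\<bar> < r" for c
    unfolding f_def using Psi_slices(1)[OF B that] by (auto intro!: holomorphic_intros)
  have h2: "(\<lambda>z. f (vector [c, z])) holomorphic_on {z. \<bar>Im z\<bar> < r}" if "\<bar>Im c\<bar> < r" for c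
    unfolding f_def using Psi_slices(2)[OF B that] by (auto intro!: holomorphic_intros)
  have p1: "f (vector [z1 + 1, z2]) = f (vector [z1, z2])" if "\<bar>Im z1\<bar> < r" "\<bar>Im z2\<bar> < r" for z1 z2
  proof -
    have "f (vector [z1 + 1, z2]) = exp (2 * of_real pi * \<i> * ((of_real (m$1) * z1 + of_real (m$2) * z2
       + of_real (nn$1) * \<Psi> (vector [z1, z2]) $ 1 + of_real (nn$2) * \<Psi> (vector [z1, z2]) $ 2) + of_real (m$1)))"
      unfolding f_def Psi_periodic(1)[OF B that] by (simp add: algebra_simps)
    also have "\<dots> = f (vector [z1, z2])" unfolding f_def by (subst exp_int_shift[OF mInt]) simp
    finally show ?thesis .
  qed
  have p2: "f (vector [z1, z2 + 1]) = f (vector [z1, z2])" if "\<bar>Im z1\<bar> < r" "\<bar>Im z2\<bar> < r" for z1 z2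
  proof -
    have "f (vector [z1, z2 + 1]) = exp (2 * of_real pi * \<i> * ((of_real (m$1) * z1 + of_real (m$2) * z2
       + of_real (nn$1) * \<Psi> (vector [z1, z2]) $ 1 + of_real (nn$2) * \<Psi> (vector [z1, z2]) $ 2) + of_real (m$2)))"
      unfolding f_def Psi_periodic(2)[OF B that] by (simp add: algebra_simps)
    also have "\<dots> = f (vector [z1, z2])" unfolding f_def by (subst exp_int_shift[OF mInt]) simp
    finally show ?thesis .
  qed
  define w1 where "w1 = \<rho> * sgn (m$1)"
  define w2 where "w2 = \<rho> * sgn (m$2)"
  have w1r: "\<bar>w1\<bar> < r" and w2r: "\<bar>w2\<bar> < r" unfolding w1_def w2_def \<rho>_def using r
    by (auto simp: abs_mult sgn_if)
  have Ish: "Icoef M \<psi> n1 n2 = integral {0..1} (\<lambda>b. integral {0..1} (\<lambda>a. f (vector [of_real a + \<i> * of_real w1, of_real b + \<i> * of_real w2])))"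
    unfolding Ieq by (rule shift2[OF cont h1 h2 p1 p2 w1r w2r])
  define Bd where "Bd = exp (- 2 * pi * \<rho> * l1r m + 2 * pi * \<delta> * l1r nn)"
  have pt: "norm (f (vector [of_real a + \<i> * of_real w1, of_real b + \<i> * of_real w2])) \<le> Bd" for a b :: real
  proof -
    define z :: "complex^2" where "z = vector [of_real a + \<i> * of_real w1, of_real b + \<i> * of_real w2]"
    have zs: "z \<in> strip r" unfolding z_def strip_vector using w1r w2r by simp
    have Pb: "cmod (\<Psi> z $ j) \<le> \<delta>" for j
      using l1c_bounds(3)[of "\<Psi> z" j] Psi_bound[OF B r d zs] by linarith
    have nb: "nn$j * Im (\<Psi> z $ j) \<ge> - (\<bar>nn$j\<bar> * \<delta>)" for j
    proof -
      have "\<bar>nn$j * Im (\<Psi> z $ j)\<bar> \<le> \<bar>nn$j\<bar> * \<delta>"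
        unfolding abs_mult by (intro mult_left_mono order.trans[OF abs_Im_le_cmod Pb]) auto
      then show ?thesis by linarith
    qed
    have mw: "m$1 * w1 = \<rho> * \<bar>m$1\<bar>" "m$2 * w2 = \<rho> * \<bar>m$2\<bar>"
      unfolding w1_def w2_def by (simp_all add: abs_sgn)
    have Imphi: "Im (of_real (m$1) * z$1 + of_real (m$2) * z$2 + of_real (nn$1) * \<Psi> z $ 1 + of_real (nn$2) * \<Psi> z $ 2)
       = m$1 * w1 + m$2 * w2 + nn$1 * Im (\<Psi> z $ 1) + nn$2 * Im (\<Psi> z $ 2)"
      unfolding z_def by simp
    have "Im (of_real (m$1) * z$1 + of_real (m$2) * z$2 + of_real (nn$1) * \<Psi> z $ 1 + of_real (nn$2) * \<Psi> z $ 2)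
       \<ge> \<rho> * l1r m - \<delta> * l1r nn"
      unfolding Imphi mw l1r_def using nb[of 1] nb[of 2] by (simp add: algebra_simps)
    then have "Re (2 * of_real pi * \<i> * (of_real (m$1) * z$1 + of_real (m$2) * z$2 + of_real (nn$1) * \<Psi> z $ 1 + of_real (nn$2) * \<Psi> z $ 2))
        \<le> - 2 * pi * \<rho> * l1r m + 2 * pi * \<delta> * l1r nn"
    proof -
      have "2 * pi * (\<rho> * l1r m - \<delta> * l1r nn) \<le> 2 * pi * Im (of_real (m$1) * z$1 + of_real (m$2) * z$2 + of_real (nn$1) * \<Psi> z $ 1 + of_real (nn$2) * \<Psi> z $ 2)"
        using pi_gt_zero \<open>\<rho> * l1r m - \<delta> * l1r nn \<le> _\<close> by (intro mult_left_mono) auto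
      then show ?thesis unfolding re_2pii by (simp add: algebra_simps)
    qed
    then show ?thesis unfolding Bd_def f_def z_def[symmetric] by simp
  qed
  have "cmod (Icoef M \<psi> n1 n2) \<le> Bd"
    unfolding Ish by (intro integral_norm_le01 pt)
  then show ?thesis unfolding Bd_def m_def nn_def \<rho>_def .
qed


theorem proposition3p4:
  fixes M :: "real^2^2" and r :: real
  assumes "SL2Z M" and "hyperbolic M" and "r > 0"
  shows "\<exists>\<delta>>0. \<exists>c1 c2. 0 < c2 \<and> c2 < c1 \<and>
    (\<forall>n1 n2 :: int^2. \<forall>\<psi> \<Psi>. in_Br r \<psi> \<Psi> \<longrightarrow> dTM r \<Psi> \<le> ereal \<delta> \<longrightarrow>
       exp (- 2 * pi * c1 * (normM M (ivec n1) - normM M (ivec n2))) * cmod (Icoef M \<psi> n1 n2)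
         \<le> exp (- 2 * pi * c2 * (l1r (ivec n1) + l1r (ivec n2))))"
proof -
  have det: "det M = 1" using assms(1) unfolding SL2Z_def by auto
  obtain \<kappa> K where k0: "\<kappa> > 0" and K0: "K > 0"
    and NB: "\<And>y m. normM M (transpose M *v y - m) - normM M y \<ge> \<kappa> * l1r y - K * l1r m"
    using normM_bound[OF det assms(2)] by blast
  define A where "A = transpose M"
  define aa where "aa = \<bar>A$1$1\<bar> + \<bar>A$1$2\<bar> + \<bar>A$2$1\<bar> + \<bar>A$2$2\<bar>"
  have aa0: "aa \<ge> 0" unfolding aa_def by simp
  have Ab: "l1r (A *v y) \<le> aa * l1r y" for y unfolding aa_def by (rule l1r_matvec)
  define \<rho> where "\<rho> = r / 2"
  have rho0: "\<rho> > 0" unfolding \<rho>_def using assms(3) by simp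
  define c1 where "c1 = \<rho> / (2 * K)"
  have c10: "c1 > 0" unfolding c1_def using rho0 K0 by simp
  have c1K: "c1 * K = \<rho> / 2" unfolding c1_def using K0 by simp
  define \<delta> where "\<delta> = c1 * \<kappa> / 3"
  have d0: "\<delta> > 0" unfolding \<delta>_def using c10 k0 by simp
  define e where "e = c1 * \<kappa> / (3 * (aa + 1))"
  have e0: "e > 0" unfolding e_def using c10 k0 aa0 by simp
  define c2 where "c2 = min (c1 / 2) (min (\<rho> / 2) e)"
  have c20: "c2 > 0" unfolding c2_def using c10 rho0 e0 by simp
  have c21: "c2 < c1" unfolding c2_def using c10 by simp
  have c2e: "c2 \<le> e" and c2r: "c2 \<le> \<rho> / 2" unfolding c2_def by auto
  have main: "exp (- 2 * pi * c1 * (normM M (ivec n1) - normM M (ivec n2))) * cmod (Icoef M \<psi> n1 n2)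
         \<le> exp (- 2 * pi * c2 * (l1r (ivec n1) + l1r (ivec n2)))"
    if B: "in_Br r \<psi> \<Psi>" and d: "dTM r \<Psi> \<le> ereal \<delta>" for n1 n2 :: "int^2" and \<psi> \<Psi>
  proof -
    define y where "y = ivec n2"
    define m where "m = A *v y - ivec n1"
    define ly where "ly = l1r y"
    define lm where "lm = l1r m"
    define ln1 where "ln1 = l1r (ivec n1)"
    define N where "N = normM M (ivec n1) - normM M (ivec n2)"
    have ly0: "ly \<ge> 0" and lm0: "lm \<ge> 0" unfolding ly_def lm_def by (simp_all add: l1r_nonneg)
    have n1eq: "ivec n1 = A *v y - m" unfolding m_def by simp
    have NN: "N \<ge> \<kappa> * ly - K * lm"
      using NB[of y m] unfolding N_def ly_def lm_def n1eq y_def A_def by simp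
    have Ib: "cmod (Icoef M \<psi> n1 n2) \<le> exp (- 2 * pi * \<rho> * lm + 2 * pi * \<delta> * ly)"
      using Icoef_bound[OF assms(1) B assms(3) d, of n1 n2]
      unfolding lm_def ly_def m_def y_def A_def \<rho>_def .
    have ln1b: "ln1 \<le> aa * ly + lm"
      unfolding ln1_def n1eq ly_def lm_def using l1r_diff[of "A *v y" m] Ab[of y] by linarith
    have h5: "c1 * N \<ge> c1 * \<kappa> * ly - \<rho> / 2 * lm"
    proof -
      have "c1 * N \<ge> c1 * (\<kappa> * ly - K * lm)" using NN c10 by (simp add: mult_left_mono)
      also have "c1 * (\<kappa> * ly - K * lm) = c1 * \<kappa> * ly - (c1 * K) * lm" by (simp add: algebra_simps)
      finally show ?thesis unfolding c1K .
    qed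
    have h1: "c2 * ln1 \<le> c2 * (aa * ly + lm)" using ln1b c20 by (simp add: mult_left_mono)
    have h2: "c2 * ((aa + 1) * ly) \<le> e * ((aa + 1) * ly)"
      using c2e aa0 ly0 by (intro mult_right_mono) auto
    have h3: "e * ((aa + 1) * ly) = c1 * \<kappa> * ly / 3" unfolding e_def using aa0 by (simp add: field_simps)
    have h4: "c2 * lm \<le> \<rho> / 2 * lm" by (rule mult_right_mono[OF c2r lm0])
    have h6: "c2 * (ln1 + ly) \<le> c1 * \<kappa> * ly / 3 + \<rho> / 2 * lm"
    proof -
      have "c2 * (ln1 + ly) \<le> c2 * (aa * ly + lm) + c2 * ly" using h1 by (simp add: algebra_simps)
      also have "\<dots> = c2 * ((aa + 1) * ly) + c2 * lm" by (simp add: algebra_simps)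
      finally show ?thesis using h2 h3 h4 by linarith
    qed
    have h7: "\<delta> * ly = c1 * \<kappa> * ly / 3" unfolding \<delta>_def by simp
    have h8: "c1 * \<kappa> * ly \<ge> 0" using c10 k0 ly0 by simp
    have X: "- c1 * N - \<rho> * lm + \<delta> * ly \<le> - c2 * (ln1 + ly)"
      using h5 h6 h7 h8 by linarith
    have E: "- 2 * pi * c1 * N + (- 2 * pi * \<rho> * lm + 2 * pi * \<delta> * ly) \<le> - 2 * pi * c2 * (ln1 + ly)"
    proof -
      have "2 * pi * (- c1 * N - \<rho> * lm + \<delta> * ly) \<le> 2 * pi * (- c2 * (ln1 + ly))"
        using X pi_gt_zero by (intro mult_left_mono) auto
      then show ?thesis by (simp add: algebra_simps)
    qed
    have "exp (- 2 * pi * c1 * N) * cmod (Icoef M \<psi> n1 n2) \<le> exp (- 2 * pi * c1 * N) * exp (- 2 * pi * \<rho> * lm + 2 * pi * \<delta> * ly)"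
      using Ib by (simp add: mult_left_mono)
    also have "\<dots> = exp (- 2 * pi * c1 * N + (- 2 * pi * \<rho> * lm + 2 * pi * \<delta> * ly))" by (rule exp_add[symmetric])
    also have "\<dots> \<le> exp (- 2 * pi * c2 * (ln1 + ly))" using E by simp
    finally show ?thesis unfolding N_def ln1_def ly_def y_def .
  qed
  show ?thesis using d0 c20 c21 main by blast
qed


end
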